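(* Let $(X_n)_{n\in\mathbb{N}}$ be i.i.d. real random variables with distribution function $F$ and survival function $\bar F(x)=\mathbb{P}(X_1>x)$. Assume that there exist $x_0>0$, $\alpha>0$ and a slowly varying function $L$ such that $\bar F(x)=x^{-\alpha}L(x)$ for all $x>x_0$, and that $X_1$ admits a (Lebesgue) density $f$ which is non-increasing on $[x_1,\infty)$ for some $x_1$. Let $X_{(n)}=\max_{1\le i\le n}X_i$, $a_n=F^{\leftarrow}(1-1/n)$, and for $n\ge 2$ let $Z_n=\left(X_{(n)}/a_n\right)^{\alpha/\log n}$ (on the event $X_{(n)}>0$). Then for every Borel set $A\subset[1,\infty)$, \[ \lim_{n\to\infty}\frac{1}{\log n}\log \mathbb{P}(Z_n\in A) = -\operatorname*{ess\,inf}_{x\in A}\log x, \] where the essential infimum is taken with respect to Lebesgue measure (with the conventions $\log 0=-\infty$ and that the essential infimum over a Lebesgue-null set is $+\infty$).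
   Context: A function $L:(0,\infty)\to(0,\infty)$ is slowly varying if $\lim_{x\to\infty}L(tx)/L(x)=1$ for all $t>0$. For a distribution function $F$, $F^{\leftarrow}(u)=\inf\{x\in\mathbb{R}: F(x)\ge u\}$ is its left-inverse; $a_n>0$ for all sufficiently large $n$, and $\bar F(a_n)\le 1/n$. The value of $Z_n$ on $\{X_{(n)}\le 0\}$ is irrelevant for events $\{Z_n\in A\}$ with $A\subset[1,\infty)$ once $a_n>0$. *)

theory Defs
  imports "HOL-Probability.Probability"
begin

definition slowly_varying :: "(real \<Rightarrow> real) \<Rightarrow> bool" where
  "slowly_varying L \<longleftrightarrow> (\<forall>x>0. L x > 0) \<and>
     (\<forall>t>0. ((\<lambda>x. L (t * x) / L x) \<longlongrightarrow> 1) at_top)"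

definition left_inverse :: "(real \<Rightarrow> real) \<Rightarrow> real \<Rightarrow> real" where
  "left_inverse F u = Inf {x. F x \<ge> u}"

definition sample_max :: "(nat \<Rightarrow> 'a \<Rightarrow> real) \<Rightarrow> nat \<Rightarrow> 'a \<Rightarrow> real" where
  "sample_max X n \<omega> = Max ((\<lambda>i. X i \<omega>) ` {..<n})"

definition ln_ext :: "real \<Rightarrow> ereal" where
  "ln_ext p = (if p = 0 then -\<infinity> else ereal (ln p))"

definition essinf_lebesgue :: "real set \<Rightarrow> (real \<Rightarrow> ereal) \<Rightarrow> ereal" where
  "essinf_lebesgue A g = Sup {c. emeasure lborel {x \<in> A. g x < c} = 0}"

end

theory Submission
  imports Defs "HOL-Real_Asymp.Real_Asymp"
begin


locale tset = prob_space M for M :: "'a measure" +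
  fixes X :: "nat \<Rightarrow> 'a \<Rightarrow> real" and f L :: "real \<Rightarrow> real" and \<alpha> x0 x1 :: real
  assumes Xm[measurable]: "\<And>i. X i \<in> borel_measurable M"
    and ind: "indep_vars (\<lambda>_. borel) X UNIV"
    and idd: "\<And>i. distr M borel (X i) = distr M borel (X 0)"
    and x0: "x0 > 0" and alpha: "\<alpha> > 0" and sv: "slowly_varying L"
    and tail: "\<And>x. x > x0 \<Longrightarrow> prob {\<omega> \<in> space M. X 0 \<omega> > x} = x powr (-\<alpha>) * L x"
    and dens: "distributed M lborel (X 0) (\<lambda>x. ennreal (f x))"
    and fnn: "\<And>x. f x \<ge> 0"
    and fmono: "\<And>x y. x1 \<le> x \<Longrightarrow> x \<le> y \<Longrightarrow> f y \<le> f x"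
begin

definition G :: "real \<Rightarrow> real" where "G x = prob {\<omega> \<in> space M. X 0 \<omega> > x}"

lemma Lpos: "x > 0 \<Longrightarrow> L x > 0"
  using sv unfolding slowly_varying_def by auto

lemma Llim: "t > 0 \<Longrightarrow> ((\<lambda>x. L (t * x) / L x) \<longlongrightarrow> 1) at_top"
  using sv unfolding slowly_varying_def by auto

lemma G_tail: "x > x0 \<Longrightarrow> G x = x powr (-\<alpha>) * L x"
  using tail by (simp add: G_def)

lemma prob_same: assumes "S \<in> sets borel"
  shows "prob {\<omega> \<in> space M. X i \<omega> \<in> S} = prob {\<omega> \<in> space M. X 0 \<omega> \<in> S}"
proof -
  have "measure (distr M borel (X i)) S = measure (distr M borel (X 0)) S" using idd[of i] by simp
  then have "prob (X i -` S \<inter> space M) = prob (X 0 -` S \<inter> space M)"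
    using assms by (simp add: measure_distr)
  moreover have "\<And>j. X j -` S \<inter> space M = {\<omega> \<in> space M. X j \<omega> \<in> S}" by auto
  ultimately show ?thesis by simp
qed

lemma G_anti: "x \<le> y \<Longrightarrow> G y \<le> G x"
  unfolding G_def by (intro finite_measure_mono) auto

lemma G_nonneg: "G x \<ge> 0" by (simp add: G_def)

lemma G_pos: "G x > 0"
proof -
  define y where "y = max x x0 + 1"
  have "G y > 0" using G_tail[of y] Lpos[of y] x0 by (simp add: y_def)
  moreover have "G y \<le> G x" by (rule G_anti) (simp add: y_def)
  ultimately show ?thesis by simp
qed

lemma f_meas[measurable]: "f \<in> borel_measurable borel"
proof -
  have "(\<lambda>x. ennreal (f x)) \<in> borel_measurable lborel"
    using dens by (rule distributed_borel_measurable)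
  then have "(\<lambda>x. enn2real (ennreal (f x))) \<in> borel_measurable borel" by simp
  then show ?thesis using fnn by simp
qed

lemma prob_dens: assumes [measurable]: "S \<in> sets borel"
  shows "emeasure M {\<omega> \<in> space M. X 0 \<omega> \<in> S} = (\<integral>\<^sup>+x. ennreal (f x) * indicator S x \<partial>lborel)"
proof -
  have "emeasure M (X 0 -` S \<inter> space M) = (\<integral>\<^sup>+x. ennreal (f x) * indicator S x \<partial>lborel)"
    using distributed_emeasure[OF dens, of S] by simp
  moreover have "X 0 -` S \<inter> space M = {\<omega> \<in> space M. X 0 \<omega> \<in> S}" by auto
  ultimately show ?thesis by simp
qed

lemma G_diff: assumes "x1 \<le> a" "a \<le> b"
  shows "f b * (b - a) \<le> G a - G b" "G a - G b \<le> f a * (b - a)"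
proof -
  have eq: "G a - G b = prob {\<omega> \<in> space M. X 0 \<omega> \<in> {a<..b}}"
  proof -
    have "{\<omega> \<in> space M. X 0 \<omega> > a} = {\<omega> \<in> space M. X 0 \<omega> \<in> {a<..b}} \<union> {\<omega> \<in> space M. X 0 \<omega> > b}"
      using assms by auto
    then have "G a = prob {\<omega> \<in> space M. X 0 \<omega> \<in> {a<..b}} + G b"
      unfolding G_def by (subst finite_measure_Union[symmetric]) auto
    then show ?thesis by simp
  qed
  have em: "emeasure M {\<omega> \<in> space M. X 0 \<omega> \<in> {a<..b}} = (\<integral>\<^sup>+x. ennreal (f x) * indicator {a<..b} x \<partial>lborel)"
    by (rule prob_dens) simp
  have up: "(\<integral>\<^sup>+x. ennreal (f x) * indicator {a<..b} x \<partial>lborel) \<le> (\<integral>\<^sup>+x. ennreal (f a) * indicator {a<..b} x \<partial>lborel)"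
  proof (intro nn_integral_mono)
    fix x show "ennreal (f x) * indicator {a<..b} x \<le> ennreal (f a) * indicator {a<..b} x"
      using fmono[of a x] assms by (cases "x \<in> {a<..b}") (auto intro: ennreal_leI)
  qed
  have lo: "(\<integral>\<^sup>+x. ennreal (f b) * indicator {a<..b} x \<partial>lborel) \<le> (\<integral>\<^sup>+x. ennreal (f x) * indicator {a<..b} x \<partial>lborel)"
  proof (intro nn_integral_mono)
    fix x show "ennreal (f b) * indicator {a<..b} x \<le> ennreal (f x) * indicator {a<..b} x"
      using fmono[of x b] assms by (cases "x \<in> {a<..b}") (auto intro: ennreal_leI)
  qed
  have ia: "(\<integral>\<^sup>+x. ennreal (f a) * indicator {a<..b} x \<partial>lborel) = ennreal (f a * (b - a))"
    using assms fnn[of a] by (simp add: nn_integral_cmult_indicator ennreal_mult)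
  have ib: "(\<integral>\<^sup>+x. ennreal (f b) * indicator {a<..b} x \<partial>lborel) = ennreal (f b * (b - a))"
    using assms fnn[of b] by (simp add: nn_integral_cmult_indicator ennreal_mult)
  have e2: "emeasure M {\<omega> \<in> space M. X 0 \<omega> \<in> {a<..b}} = ennreal (prob {\<omega> \<in> space M. X 0 \<omega> \<in> {a<..b}})"
    by (simp add: emeasure_eq_measure)
  have "ennreal (f b * (b - a)) \<le> ennreal (G a - G b)" using lo ib em e2 eq by simp
  then show "f b * (b - a) \<le> G a - G b"
    using G_anti[of a b] assms by (subst (asm) ennreal_le_iff) auto
  have "ennreal (G a - G b) \<le> ennreal (f a * (b - a))" using up ia em e2 eq by simp
  then show "G a - G b \<le> f a * (b - a)"
    using fnn[of a] assms by (subst (asm) ennreal_le_iff) auto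
qed

end



lemma powr_big: "e > 0 \<Longrightarrow> eventually (\<lambda>y::real. y powr e \<ge> K) at_top"
proof -
  assume e: "e > 0"
  have "filterlim (\<lambda>y::real. y powr e) at_top at_top" using e by real_asymp
  then show ?thesis by (simp add: filterlim_at_top)
qed

context tset begin

lemma L_eq: "y > x0 \<Longrightarrow> L y = y powr \<alpha> * G y"
  using G_tail[of y] x0 by (simp add: powr_minus field_simps)

lemma L_bounds: assumes "\<epsilon> > 0"
  shows "eventually (\<lambda>x. x powr (-\<epsilon>) \<le> L x \<and> L x \<le> x powr \<epsilon>) at_top"
proof -
  define e where "e = \<epsilon> / 2"
  have e: "e > 0" using assms by (simp add: e_def)
  have g1: "1 < 2 powr e" using e by (simp add: powr_def)
  then have g2: "2 powr (-e) < 1" by (simp add: powr_minus inverse_less_1_iff)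
  have lim2: "((\<lambda>x. L (2 * x) / L x) \<longlongrightarrow> 1) at_top" using Llim[of 2] by simp
  have "eventually (\<lambda>x. L (2 * x) / L x < 2 powr e) at_top"
    by (rule order_tendstoD(2)[OF lim2 g1])
  moreover have "eventually (\<lambda>x. L (2 * x) / L x > 2 powr (-e)) at_top"
    by (rule order_tendstoD(1)[OF lim2 g2])
  ultimately have "eventually (\<lambda>x. 2 powr (-e) < L (2 * x) / L x \<and> L (2 * x) / L x < 2 powr e) at_top"
    by eventually_elim auto
  then obtain X0 where X0: "\<And>x. x \<ge> X0 \<Longrightarrow> 2 powr (-e) < L (2 * x) / L x \<and> L (2 * x) / L x < 2 powr e"
    by (auto simp: eventually_at_top_linorder)
  define Y where "Y = max X0 (x0 + 1)"
  have Y: "Y > x0" "Y > 0" "Y \<ge> X0" using x0 by (auto simp: Y_def)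
  define Cu where "Cu = (2 * Y) powr \<alpha> * G Y"
  define Cl where "Cl = Y powr \<alpha> * G (2 * Y)"
  have Cl: "Cl > 0" using Y G_pos by (simp add: Cl_def)
  have base: "Cl \<le> L y \<and> L y \<le> Cu" if "Y \<le> y" "y \<le> 2 * Y" for y
  proof -
    have "L y = y powr \<alpha> * G y" using L_eq[of y] Y that by simp
    moreover have "y powr \<alpha> * G y \<le> (2 * Y) powr \<alpha> * G Y"
      using that Y G_anti[of Y y] G_pos G_nonneg alpha
      by (intro mult_mono powr_mono2) auto
    moreover have "Y powr \<alpha> * G (2 * Y) \<le> y powr \<alpha> * G y"
      using that Y G_anti[of y "2 * Y"] G_pos G_nonneg alpha
      by (intro mult_mono powr_mono2) auto
    ultimately show ?thesis by (simp add: Cu_def Cl_def)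
  qed
  have Lp: "L y > 0" if "y \<ge> Y" for y using Lpos Y that by simp
  have ind: "\<forall>y. Y \<le> y \<and> y \<le> 2 ^ k * Y \<longrightarrow> Cl * (y / Y) powr (-e) \<le> L y \<and> L y \<le> Cu * (y / Y) powr e" for k
  proof (induction k)
    case 0
    show ?case
    proof (intro allI impI)
      fix y assume "Y \<le> y \<and> y \<le> 2 ^ 0 * Y"
      then have "y = Y" by simp
      then show "Cl * (y / Y) powr (-e) \<le> L y \<and> L y \<le> Cu * (y / Y) powr e"
        using base[of Y] Y by simp
    qed
  next
    case (Suc k)
    show ?case
    proof (intro allI impI)
      fix y assume y: "Y \<le> y \<and> y \<le> 2 ^ Suc k * Y"
      show "Cl * (y / Y) powr (-e) \<le> L y \<and> L y \<le> Cu * (y / Y) powr e"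
      proof (cases "y \<le> 2 * Y")
        case True
        have g1: "(y / Y) powr e \<ge> 1" using y Y e by (simp add: ge_one_powr_ge_zero)
        then have "(y / Y) powr (-e) \<le> 1" by (simp add: powr_minus inverse_le_1_iff)
        moreover note g1
        ultimately have q1: "(y / Y) powr (-e) \<le> 1" and q2: "1 \<le> (y / Y) powr e" by auto
        have Cu0: "Cu \<ge> 0" using G_nonneg by (simp add: Cu_def)
        have "Cl * (y / Y) powr (-e) \<le> Cl * 1" using q1 Cl by (intro mult_left_mono) auto
        moreover have "Cu * 1 \<le> Cu * (y / Y) powr e" using q2 Cu0 by (intro mult_left_mono) auto
        ultimately show ?thesis using base[of y] y True by auto
      next
        case False
        define z where "z = y / 2"
        have z: "Y \<le> z" "z \<le> 2 ^ k * Y" using y False by (auto simp: z_def)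
        have IH: "Cl * (z / Y) powr (-e) \<le> L z \<and> L z \<le> Cu * (z / Y) powr e"
          using Suc.IH z by blast
        have yz: "y = 2 * z" by (simp add: z_def)
        have r: "2 powr (-e) < L y / L z \<and> L y / L z < 2 powr e" using X0[of z] z Y yz by simp
        have Lz: "L z > 0" using Lp z by simp
        have r1: "L y \<le> 2 powr e * L z" using r Lz by (simp add: divide_less_eq)
        have r2: "2 powr (-e) * L z \<le> L y" using r Lz by (simp add: less_divide_eq)
        have p1: "(y / Y) powr e = 2 powr e * (z / Y) powr e"
          by (simp add: yz powr_mult[symmetric])
        have p2: "(y / Y) powr (-e) = 2 powr (-e) * (z / Y) powr (-e)"
          by (simp add: yz powr_mult[symmetric])
        have "L y \<le> 2 powr e * L z" by (rule r1)
        also have "\<dots> \<le> 2 powr e * (Cu * (z / Y) powr e)" using IH by (intro mult_left_mono) auto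
        also have "\<dots> = Cu * (y / Y) powr e" using p1 by simp
        finally have u: "L y \<le> Cu * (y / Y) powr e" .
        have "Cl * (y / Y) powr (-e) = 2 powr (-e) * (Cl * (z / Y) powr (-e))" using p2 by simp
        also have "\<dots> \<le> 2 powr (-e) * L z" using IH by (intro mult_left_mono) auto
        also have "\<dots> \<le> L y" by (rule r2)
        finally have l: "Cl * (y / Y) powr (-e) \<le> L y" .
        show ?thesis using u l by simp
      qed
    qed
  qed
  have all: "Cl * (y / Y) powr (-e) \<le> L y \<and> L y \<le> Cu * (y / Y) powr e" if "y \<ge> Y" for y
  proof -
    obtain k where "y / Y < 2 ^ k" using real_arch_pow[of 2 "y / Y"] by auto
    then have "y \<le> 2 ^ k * Y" using Y by (simp add: divide_less_eq)
    then show ?thesis using ind[of k] that by blast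
  qed
  have ev1: "eventually (\<lambda>y. y powr e \<ge> Cu * Y powr (-e)) at_top" by (rule powr_big[OF e])
  have ev2: "eventually (\<lambda>y. y powr e \<ge> 1 / (Cl * Y powr e)) at_top" by (rule powr_big[OF e])
  have ev3: "eventually (\<lambda>y. y \<ge> Y) at_top" by simp
  show ?thesis using ev1 ev2 ev3
  proof eventually_elim
    case (elim y)
    have y0: "y > 0" using elim Y by simp
    have A1: "(y / Y) powr e = y powr e * Y powr (-e)"
      using powr_divide[of y Y e] y0 Y by (simp add: powr_minus divide_inverse)
    have A2: "(y / Y) powr (-e) = y powr (-e) * Y powr e"
      using powr_divide[of y Y "-e"] y0 Y by (simp add: powr_minus divide_inverse)
    have eps: "y powr \<epsilon> = y powr e * y powr e" "y powr (-\<epsilon>) = y powr (-e) * y powr (-e)"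
      by (simp_all add: e_def powr_add[symmetric])
    have "L y \<le> Cu * (y powr e * Y powr (-e))" using all[of y] elim A1 by simp
    also have "\<dots> = (Cu * Y powr (-e)) * y powr e" by simp
    also have "\<dots> \<le> y powr e * y powr e" using elim by (intro mult_right_mono) auto
    finally have u: "L y \<le> y powr \<epsilon>" using eps by simp
    have "y powr (-e) * y powr (-e) = y powr (-e) * (1 / y powr e)" by (simp add: powr_minus divide_inverse)
    also have "\<dots> \<le> y powr (-e) * (Cl * Y powr e)"
    proof -
      have "1 / y powr e \<le> Cl * Y powr e"
        using elim Cl Y y0 by (simp add: divide_le_eq field_simps)
      then show ?thesis by (intro mult_left_mono) auto
    qed
    also have "\<dots> = Cl * (y powr (-e) * Y powr e)" by simp
    also have "\<dots> \<le> L y" using all[of y] elim A2 by simp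
    finally have l: "y powr (-\<epsilon>) \<le> L y" using eps by simp
    show ?case using u l by simp
  qed
qed

end



context tset begin

lemma G_lim: "((\<lambda>x. ln (G x) / ln x) \<longlongrightarrow> -\<alpha>) at_top"
  unfolding tendsto_iff
proof (intro allI impI)
  fix e :: real assume e: "e > 0"
  have ev1: "eventually (\<lambda>x. x powr (-(e/2)) \<le> L x \<and> L x \<le> x powr (e/2)) at_top"
    using L_bounds[of "e/2"] e by simp
  have ev2: "eventually (\<lambda>x. x > max x0 1) at_top" by (rule eventually_gt_at_top)
  show "eventually (\<lambda>x. dist (ln (G x) / ln x) (-\<alpha>) < e) at_top"
    using ev1 ev2
  proof eventually_elim
    case (elim x)
    have x: "x > x0" "x > 1" using elim by auto
    have lx: "ln x > 0" using x by simp
    have Lx: "L x > 0" using Lpos x by simp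
    have "ln (G x) = ln (x powr (-\<alpha>)) + ln (L x)"
      using G_tail[of x] x Lx by (simp add: ln_mult)
    also have "\<dots> = -\<alpha> * ln x + ln (L x)" using x by (simp add: ln_powr)
    finally have eq: "ln (G x) = -\<alpha> * ln x + ln (L x)" .
    have "ln (L x) \<le> ln (x powr (e/2))" using elim Lx by (subst ln_le_cancel_iff) auto
    then have b1: "ln (L x) \<le> (e/2) * ln x" using x by (simp add: ln_powr)
    have "ln (x powr (-(e/2))) \<le> ln (L x)" using elim Lx by (subst ln_le_cancel_iff) auto
    then have b2: "-(e/2) * ln x \<le> ln (L x)" using x by (simp add: ln_powr)
    have q1: "ln (G x) / ln x - (-\<alpha>) = ln (L x) / ln x" using eq lx by (simp add: field_simps)
    have q2: "\<bar>ln (L x) / ln x\<bar> \<le> e/2"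
      using b1 b2 lx by (simp add: abs_le_iff divide_le_eq le_divide_eq)
    have "\<bar>ln (G x) / ln x - (-\<alpha>)\<bar> < e" unfolding q1 using q2 e by linarith
    then show ?case by (simp add: dist_real_def)
  qed
qed

definition cc :: real where "cc = 2 powr (-\<alpha>/2)"

lemma cc: "0 < cc" "cc < 1"
proof -
  show "0 < cc" by (simp add: cc_def)
  have "1 < 2 powr (\<alpha>/2)" using alpha by (simp add: powr_def)
  then show "cc < 1" by (simp add: cc_def powr_minus inverse_less_1_iff)
qed

lemma G2: "eventually (\<lambda>x. G (2 * x) \<le> cc * G x) at_top"
proof -
  have g1: "1 < 2 powr (\<alpha>/2)" using alpha by (simp add: powr_def)
  have lim2: "((\<lambda>x. L (2 * x) / L x) \<longlongrightarrow> 1) at_top" using Llim[of 2] by simp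
  have "eventually (\<lambda>x. L (2 * x) / L x < 2 powr (\<alpha>/2)) at_top"
    by (rule order_tendstoD(2)[OF lim2 g1])
  moreover have "eventually (\<lambda>x. x > max x0 1) at_top" by (rule eventually_gt_at_top)
  ultimately show ?thesis
  proof eventually_elim
    case (elim x)
    have x: "x > x0" "x > 0" "2 * x > x0" using elim x0 by auto
    have Lx: "L x > 0" using Lpos x by simp
    have r: "L (2 * x) \<le> 2 powr (\<alpha>/2) * L x" using elim Lx by (simp add: divide_less_eq)
    have "G (2 * x) = 2 powr (-\<alpha>) * (x powr (-\<alpha>) * L (2 * x))"
      using G_tail[of "2*x"] x by (simp add: powr_mult)
    also have "\<dots> \<le> 2 powr (-\<alpha>) * (x powr (-\<alpha>) * (2 powr (\<alpha>/2) * L x))"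
      using r by (intro mult_left_mono) auto
    also have "\<dots> = (2 powr (-\<alpha>) * 2 powr (\<alpha>/2)) * (x powr (-\<alpha>) * L x)" by simp
    also have "2 powr (-\<alpha>) * 2 powr (\<alpha>/2) = cc" by (simp add: cc_def powr_add[symmetric])
    also have "x powr (-\<alpha>) * L x = G x" using G_tail[of x] x by simp
    finally show ?case .
  qed
qed

definition h :: "real \<Rightarrow> real" where "h x = (1 - cc) * G x / x"

lemma f_ge_h: "eventually (\<lambda>x. h x \<le> f x) at_top"
  using G2 eventually_gt_at_top[of "max x1 0"]
proof eventually_elim
  case (elim x)
  have x: "x1 \<le> x" "x > 0" using elim by auto
  have "G x - G (2 * x) \<le> f x * (2 * x - x)" using G_diff(2)[of x "2*x"] x by simp
  then have "(1 - cc) * G x \<le> f x * x" using elim by (simp add: algebra_simps)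
  then show ?case using x by (simp add: h_def divide_le_eq mult.commute)
qed

lemma h_pos: "x > 0 \<Longrightarrow> h x > 0"
  using cc G_pos[of x] by (simp add: h_def)

lemma h_lim: "((\<lambda>x. ln (h x) / ln x) \<longlongrightarrow> -\<alpha> - 1) at_top"
proof -
  have l1: "((\<lambda>x. ln (1 - cc) / ln x) \<longlongrightarrow> 0) at_top" by real_asymp
  have "((\<lambda>x. ln (1 - cc) / ln x + ln (G x) / ln x - 1) \<longlongrightarrow> 0 + (-\<alpha>) - 1) at_top"
    by (intro tendsto_intros l1 G_lim)
  moreover have "eventually (\<lambda>x. ln (1 - cc) / ln x + ln (G x) / ln x - 1 = ln (h x) / ln x) at_top"
    using eventually_gt_at_top[of 1]
  proof eventually_elim
    case (elim x)
    have "ln (h x) = ln (1 - cc) + ln (G x) - ln x"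
      using elim cc G_pos[of x] by (simp add: h_def ln_mult ln_div)
    then show ?case using elim by (simp add: field_simps)
  qed
  ultimately show ?thesis by (simp add: tendsto_cong)
qed

end



context tset begin

definition FF :: "real \<Rightarrow> real" where "FF x = prob {\<omega> \<in> space M. X 0 \<omega> \<le> x}"

lemma FG: "FF x = 1 - G x"
proof -
  have "{\<omega> \<in> space M. X 0 \<omega> \<le> x} = space M - {\<omega> \<in> space M. X 0 \<omega> > x}" by auto
  then show ?thesis unfolding FF_def G_def by (simp add: prob_compl)
qed

lemma FF_cdf: "FF x = cdf (distr M borel (X 0)) x"
  unfolding FF_def cdf_def by (simp add: measure_distr vimage_def Int_def conj_commute)

definition an :: "nat \<Rightarrow> real" where "an n = left_inverse FF (1 - 1 / real n)"

lemma an_props: assumes "n \<ge> 2"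
  shows "FF (an n) \<ge> 1 - 1 / real n" and "\<And>x. x < an n \<Longrightarrow> FF x < 1 - 1 / real n"
proof -
  define D where "D = distr M borel (X 0)"
  interpret D: real_distribution D unfolding D_def by (rule real_distribution_distr) simp
  have FFc: "FF = cdf D" by (rule ext) (simp add: FF_cdf D_def)
  define u where "u = 1 - 1 / real n"
  have u: "0 < u" "u < 1" using assms by (auto simp: u_def field_simps)
  define S where "S = {x. FF x \<ge> u}"
  have "eventually (\<lambda>x. cdf D x > u) at_top"
    by (rule order_tendstoD(1)[OF D.cdf_lim_at_top_prob u(2)])
  then obtain x where "cdf D x > u" by (auto simp: eventually_at_top_linorder)
  then have "x \<in> S" using FFc by (simp add: S_def)
  then have Sne: "S \<noteq> {}" by auto
  have "eventually (\<lambda>x. cdf D x < u) at_bot"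
    by (rule order_tendstoD(2)[OF D.cdf_lim_at_bot u(1)])
  then obtain B where B: "\<And>x. x \<le> B \<Longrightarrow> cdf D x < u" by (auto simp: eventually_at_bot_linorder)
  have Sb: "bdd_below S"
  proof (rule bdd_belowI[of _ B])
    fix s assume "s \<in> S" then show "B \<le> s" using B[of s] FFc by (force simp: S_def)
  qed
  have an: "an n = Inf S" by (simp add: an_def left_inverse_def S_def u_def)
  show "\<And>x. x < an n \<Longrightarrow> FF x < 1 - 1 / real n"
  proof -
    fix x assume "x < an n"
    then have "x \<notin> S" using cInf_lower[OF _ Sb, of x] an by auto
    then show "FF x < 1 - 1 / real n" by (simp add: S_def u_def)
  qed
  have ev: "eventually (\<lambda>y. u \<le> cdf D y) (at_right (Inf S))"
    using eventually_at_right_less[of "Inf S"]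
  proof eventually_elim
    case (elim y)
    then obtain s where s: "s \<in> S" "s < y" using cInf_lessD[OF Sne] by blast
    then have "u \<le> cdf D s" using FFc by (simp add: S_def)
    also have "\<dots> \<le> cdf D y" using s by (intro D.cdf_nondecreasing) simp
    finally show ?case .
  qed
  have "(cdf D \<longlongrightarrow> cdf D (Inf S)) (at_right (Inf S))"
    using D.cdf_is_right_cont by (simp add: continuous_within)
  then have "u \<le> cdf D (Inf S)" by (rule tendsto_lowerbound[OF _ ev]) simp
  then show "FF (an n) \<ge> 1 - 1 / real n" using FFc an by (simp add: u_def)
qed

lemma an_G: assumes "n \<ge> 2"
  shows "G (an n) \<le> 1 / real n" and "\<And>x. x < an n \<Longrightarrow> G x > 1 / real n"
  using an_props[OF assms] FG by (auto simp: algebra_simps)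

lemma an_lim: "filterlim an at_top sequentially"
  unfolding filterlim_at_top
proof (intro allI)
  fix K :: real
  have gk: "G K > 0" by (rule G_pos)
  obtain N :: nat where N: "max 2 (1 / G K) < real N" using reals_Archimedean2 by blast
  have "eventually (\<lambda>n::nat. real n > max 2 (1 / G K)) sequentially"
    using eventually_ge_at_top[of N] by eventually_elim (use N in auto)
  then show "eventually (\<lambda>n. K \<le> an n) sequentially"
  proof eventually_elim
    case (elim n)
    have n2: "n \<ge> 2" using elim by simp
    have "1 / real n < G K" using elim gk by (simp add: divide_less_eq field_simps)
    show ?case
    proof (rule ccontr)
      assume "\<not> K \<le> an n"
      then have "G K \<le> G (an n)" by (intro G_anti) simp
      then show False using an_G(1)[OF n2] \<open>1 / real n < G K\<close> by simp
    qed
  qed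
qed

lemma an_ratio: "((\<lambda>n. ln (an n) / ln (real n)) \<longlongrightarrow> 1 / \<alpha>) sequentially"
proof -
  have Gl': "((\<lambda>x. - ln (G x) / ln x) \<longlongrightarrow> \<alpha>) at_top"
    using tendsto_minus[OF G_lim] by simp
  have up: "((\<lambda>n. - ln (G (an n)) / ln (an n)) \<longlongrightarrow> \<alpha>) sequentially"
    using filterlim_compose[OF Gl' an_lim] by (simp add: o_def)
  have d2: "filterlim (\<lambda>x::real. x / 2) at_top at_top" by real_asymp
  have r: "((\<lambda>x::real. ln (x / 2) / ln x) \<longlongrightarrow> 1) at_top" by real_asymp
  have k: "((\<lambda>x. (- ln (G (x / 2)) / ln (x / 2)) * (ln (x / 2) / ln x)) \<longlongrightarrow> \<alpha> * 1) at_top"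
    by (intro tendsto_mult r filterlim_compose[OF Gl' d2])
  have k2: "((\<lambda>x. - ln (G (x / 2)) / ln x) \<longlongrightarrow> \<alpha>) at_top"
  proof -
    have "eventually (\<lambda>x. (- ln (G (x / 2)) / ln (x / 2)) * (ln (x / 2) / ln x) = - ln (G (x / 2)) / ln x) at_top"
      using eventually_gt_at_top[of 2] by eventually_elim (simp add: field_simps)
    from Lim_transform_eventually[OF k[unfolded mult_1_right] this] show ?thesis .
  qed
  have lo: "((\<lambda>n. - ln (G (an n / 2)) / ln (an n)) \<longlongrightarrow> \<alpha>) sequentially"
    using filterlim_compose[OF k2 an_lim] by (simp add: o_def)
  have ev: "eventually (\<lambda>n. n \<ge> 2 \<and> an n > 2) sequentially"
    using eventually_ge_at_top[of 2] filterlim_at_top_dense[THEN iffD1, OF an_lim, rule_format, of 2]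
    by eventually_elim auto
  have e1: "eventually (\<lambda>n. - ln (G (an n / 2)) / ln (an n) \<le> ln (real n) / ln (an n)) sequentially"
    using ev
  proof eventually_elim
    case (elim n)
    have "G (an n / 2) > 1 / real n" using an_G(2)[of n "an n / 2"] elim by simp
    then have "ln (1 / real n) < ln (G (an n / 2))" using elim G_pos by (subst ln_less_cancel_iff) auto
    then have "- ln (G (an n / 2)) \<le> ln (real n)" using elim by (simp add: ln_div)
    then show ?case using elim by (intro divide_right_mono) auto
  qed
  have e2: "eventually (\<lambda>n. ln (real n) / ln (an n) \<le> - ln (G (an n)) / ln (an n)) sequentially"
    using ev
  proof eventually_elim
    case (elim n)
    have "G (an n) \<le> 1 / real n" using an_G(1)[of n] elim by simp
    then have "ln (G (an n)) \<le> ln (1 / real n)" using elim G_pos by (subst ln_le_cancel_iff) auto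
    then have "ln (real n) \<le> - ln (G (an n))" using elim by (simp add: ln_div)
    then show ?case using elim by (intro divide_right_mono) auto
  qed
  have "((\<lambda>n. ln (real n) / ln (an n)) \<longlongrightarrow> \<alpha>) sequentially"
    by (rule tendsto_sandwich[OF e1 e2 lo up])
  then have "((\<lambda>n. inverse (ln (real n) / ln (an n))) \<longlongrightarrow> inverse \<alpha>) sequentially"
    using alpha by (intro tendsto_inverse) auto
  then show ?thesis by (simp add: inverse_eq_divide)
qed

end



context tset begin

lemma smax_meas[measurable]: "sample_max X n \<in> borel_measurable M"
  unfolding sample_max_def by (rule borel_measurable_Max) auto

lemma smax_ex: "n \<ge> 1 \<Longrightarrow> \<exists>i<n. sample_max X n \<omega> = X i \<omega>"
proof -
  assume "n \<ge> 1"
  then have "finite ((\<lambda>i. X i \<omega>) ` {..<n})" "(\<lambda>i. X i \<omega>) ` {..<n} \<noteq> {}" by (auto simp: lessThan_empty_iff)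
  from Max_in[OF this] show ?thesis unfolding sample_max_def by auto
qed

lemma smax_ge: "i < n \<Longrightarrow> X i \<omega> \<le> sample_max X n \<omega>"
  unfolding sample_max_def by (rule Max_ge) auto

definition Zn :: "nat \<Rightarrow> 'a \<Rightarrow> real" where
  "Zn n \<omega> = (if sample_max X n \<omega> > 0 then (sample_max X n \<omega> / an n) powr (\<alpha> / ln (real n)) else 0)"

lemma Zn_meas[measurable]: "Zn n \<in> borel_measurable M"
  unfolding Zn_def by measurable

lemma union_bound:
  assumes S[measurable]: "S \<in> sets borel" and n: "n \<ge> 1"
  shows "prob {\<omega> \<in> space M. sample_max X n \<omega> \<in> S} \<le> real n * prob {\<omega> \<in> space M. X 0 \<omega> \<in> S}"
proof -
  have sub: "{\<omega> \<in> space M. sample_max X n \<omega> \<in> S} \<subseteq> (\<Union>i\<in>{..<n}. {\<omega> \<in> space M. X i \<omega> \<in> S})"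
  proof
    fix \<omega> assume "\<omega> \<in> {\<omega> \<in> space M. sample_max X n \<omega> \<in> S}"
    then have \<omega>: "\<omega> \<in> space M" "sample_max X n \<omega> \<in> S" by auto
    obtain i where i: "i < n" "sample_max X n \<omega> = X i \<omega>" using smax_ex[OF n] by blast
    show "\<omega> \<in> (\<Union>i\<in>{..<n}. {\<omega> \<in> space M. X i \<omega> \<in> S})" using i \<omega> by auto
  qed
  have m: "(\<Union>i\<in>{..<n}. {\<omega> \<in> space M. X i \<omega> \<in> S}) \<in> sets M" by measurable
  have "prob {\<omega> \<in> space M. sample_max X n \<omega> \<in> S} \<le> prob (\<Union>i\<in>{..<n}. {\<omega> \<in> space M. X i \<omega> \<in> S})"
    by (rule finite_measure_mono[OF sub m])
  also have "\<dots> \<le> (\<Sum>i\<in>{..<n}. prob {\<omega> \<in> space M. X i \<omega> \<in> S})"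
  proof (rule finite_measure_subadditive_finite)
    show "(\<lambda>i. {\<omega> \<in> space M. X i \<omega> \<in> S}) ` {..<n} \<subseteq> sets M" by (auto intro: measurable_sets_Collect)
  qed simp
  also have "\<dots> = (\<Sum>i\<in>{..<n}. prob {\<omega> \<in> space M. X 0 \<omega> \<in> S})"
    by (rule sum.cong[OF refl prob_same[OF S]])
  finally show ?thesis by simp
qed

lemma upper_tail:
  assumes n: "n \<ge> 2" and a: "an n > 0" and s: "s > 0"
  shows "prob {\<omega> \<in> space M. Zn n \<omega> \<ge> exp s} \<le> real n * G (an n * real n powr (s / \<alpha>) / 2)"
proof -
  define y where "y = an n * real n powr (s / \<alpha>)"
  define r where "r = \<alpha> / ln (real n)"
  have lnn: "ln (real n) > 0" using n by simp
  have r: "r > 0" using alpha lnn by (simp add: r_def)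
  have y: "y > 0" using a n by (simp add: y_def)
  have sub: "{\<omega> \<in> space M. Zn n \<omega> \<ge> exp s} \<subseteq> {\<omega> \<in> space M. sample_max X n \<omega> \<in> {y/2<..}}"
  proof
    fix \<omega> assume "\<omega> \<in> {\<omega> \<in> space M. Zn n \<omega> \<ge> exp s}"
    then have \<omega>: "\<omega> \<in> space M" "exp s \<le> Zn n \<omega>" by auto
    have pos: "sample_max X n \<omega> > 0"
    proof (rule ccontr)
      assume "\<not> ?thesis" then have "Zn n \<omega> = 0" by (simp add: Zn_def)
      then show False using \<omega> by (metis exp_gt_zero not_le)
    qed
    define q where "q = sample_max X n \<omega> / an n"
    have q: "q > 0" using pos a by (simp add: q_def)
    have "exp s \<le> q powr r" using \<omega> pos by (simp add: Zn_def q_def r_def)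
    then have "(exp s) powr (1 / r) \<le> (q powr r) powr (1 / r)"
      using r by (intro powr_mono2) auto
    also have "(q powr r) powr (1 / r) = q" using r q by (simp add: powr_powr)
    also have "(exp s) powr (1 / r) = real n powr (s / \<alpha>)"
    proof -
      have "(exp s) powr (1 / r) = exp ((1 / r) * s)" by (simp add: powr_def)
      also have "(1 / r) * s = s / \<alpha> * ln (real n)" by (simp add: r_def)
      also have "exp (s / \<alpha> * ln (real n)) = real n powr (s / \<alpha>)" using n by (simp add: powr_def)
      finally show ?thesis .
    qed
    finally have "real n powr (s / \<alpha>) \<le> q" .
    then have "an n * real n powr (s / \<alpha>) \<le> an n * q" using a by (intro mult_left_mono) auto
    also have "an n * q = sample_max X n \<omega>" using a by (simp add: q_def)
    finally have "y \<le> sample_max X n \<omega>" by (simp add: y_def)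
    then show "\<omega> \<in> {\<omega> \<in> space M. sample_max X n \<omega> \<in> {y/2<..}}" using y \<omega> by simp
  qed
  have "prob {\<omega> \<in> space M. Zn n \<omega> \<ge> exp s} \<le> prob {\<omega> \<in> space M. sample_max X n \<omega> \<in> {y/2<..}}"
    by (intro finite_measure_mono[OF sub]) measurable
  also have "\<dots> \<le> real n * prob {\<omega> \<in> space M. X 0 \<omega> \<in> {y/2<..}}"
    using n by (intro union_bound) auto
  also have "prob {\<omega> \<in> space M. X 0 \<omega> \<in> {y/2<..}} = G (y / 2)" by (simp add: G_def)
  finally show ?thesis by (simp add: y_def)
qed

lemma null_part:
  assumes N: "N \<in> sets borel" "N \<subseteq> {1..}" "emeasure lborel N = 0"
    and n: "n \<ge> 2" and a: "an n > 0"
  shows "prob {\<omega> \<in> space M. Zn n \<omega> \<in> N} = 0"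
proof -
  define r where "r = \<alpha> / ln (real n)"
  have lnn: "ln (real n) > 0" using n by simp
  have r: "r > 0" using alpha lnn by (simp add: r_def)
  define B where "B = {y. y > 0 \<and> (y / an n) powr r \<in> N}"
  have Bm[measurable]: "B \<in> sets borel" using N unfolding B_def by measurable
  define \<phi> where "\<phi> t = an n * t powr (1 / r)" for t
  have Bsub: "B \<subseteq> \<phi> ` N"
  proof
    fix y assume "y \<in> B"
    then have y: "y > 0" "(y / an n) powr r \<in> N" by (auto simp: B_def)
    have "\<phi> ((y / an n) powr r) = y" using y a r by (simp add: \<phi>_def powr_powr)
    then show "y \<in> \<phi> ` N" using y by force
  qed
  have Nnull: "N \<in> null_sets lborel" using N by (simp add: null_sets_def)
  have "N \<in> null_sets lebesgue" using null_sets_completion_iff[of N lborel] Nnull N by simp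
  then have negN: "negligible N" by (simp add: negligible_iff_null_sets)
  have diff: "\<phi> differentiable_on N"
  proof (rule differentiable_at_imp_differentiable_on)
    fix t assume "t \<in> N" then have t: "t > 0" using N by auto
    have "(\<phi> has_real_derivative an n * ((1 / r) * t powr (1 / r - 1))) (at t)"
      unfolding \<phi>_def by (intro DERIV_cmult has_real_derivative_powr t)
    then show "\<phi> differentiable (at t)"
      by (intro field_differentiable_imp_differentiable) (auto simp: field_differentiable_def)
  qed
  have "negligible (\<phi> ` N)" by (rule negligible_differentiable_image_negligible[OF _ negN diff]) simp
  then have "negligible B" using Bsub negligible_subset by blast
  then have "B \<in> null_sets lebesgue" by (simp add: negligible_iff_null_sets)
  then have Bnull: "B \<in> null_sets lborel" using null_sets_completion_iff[of B lborel] Bm by simp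
  have sub: "{\<omega> \<in> space M. Zn n \<omega> \<in> N} \<subseteq> {\<omega> \<in> space M. sample_max X n \<omega> \<in> B}"
  proof
    fix \<omega> assume "\<omega> \<in> {\<omega> \<in> space M. Zn n \<omega> \<in> N}"
    then have \<omega>: "\<omega> \<in> space M" "Zn n \<omega> \<in> N" by auto
    have pos: "sample_max X n \<omega> > 0"
    proof (rule ccontr)
      assume "\<not> ?thesis" then have "Zn n \<omega> = 0" by (simp add: Zn_def)
      then show False using \<omega> N by auto
    qed
    then show "\<omega> \<in> {\<omega> \<in> space M. sample_max X n \<omega> \<in> B}" using \<omega> by (simp add: B_def Zn_def r_def)
  qed
  have "prob {\<omega> \<in> space M. Zn n \<omega> \<in> N} \<le> prob {\<omega> \<in> space M. sample_max X n \<omega> \<in> B}"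
    using Bm by (intro finite_measure_mono[OF sub]) measurable
  also have "\<dots> \<le> real n * prob {\<omega> \<in> space M. X 0 \<omega> \<in> B}"
    using n Bm by (intro union_bound) auto
  also have "prob {\<omega> \<in> space M. X 0 \<omega> \<in> B} = 0"
  proof -
    have "emeasure M {\<omega> \<in> space M. X 0 \<omega> \<in> B} = (\<integral>\<^sup>+x. ennreal (f x) * indicator B x \<partial>lborel)"
      by (rule prob_dens[OF Bm])
    also have "\<dots> = 0" by (rule nn_integral_null_set[OF Bnull])
    finally show ?thesis by (simp add: measure_def)
  qed
  finally have "prob {\<omega> \<in> space M. Zn n \<omega> \<in> N} \<le> 0" by simp
  then show ?thesis using measure_nonneg[of M "{\<omega> \<in> space M. Zn n \<omega> \<in> N}"] by linarith
qed

end



lemma pow_bound: assumes "n \<ge> (2::nat)" shows "(1 - 1 / real n) ^ (n - 1) \<ge> exp (-1)"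
proof -
  define m where "m = n - 1"
  have m: "m \<ge> 1" "real n = real m + 1" using assms by (auto simp: m_def)
  have "1 + 1 / real m \<le> exp (1 / real m)" by (rule exp_ge_add_one_self)
  then have "(1 + 1 / real m) ^ m \<le> exp (1 / real m) ^ m" by (rule power_mono) simp
  also have "\<dots> = exp 1" using m by (simp add: exp_of_nat_mult[symmetric])
  finally have b: "(1 + 1 / real m) ^ m \<le> exp 1" .
  have "1 - 1 / real n = 1 / (1 + 1 / real m)" using m by (simp add: field_simps)
  then have "(1 - 1 / real n) ^ (n - 1) = 1 / (1 + 1 / real m) ^ m" by (simp add: m_def power_one_over)
  also have "\<dots> \<ge> 1 / exp 1"
  proof -
    have "0 < 1 + 1 / real m" by (smt (verit) divide_nonneg_nonneg of_nat_0_le_iff)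
    then have "(1 + 1 / real m) ^ m > 0" by (rule zero_less_power)
    then show ?thesis using b by (intro divide_left_mono) auto
  qed
  finally show ?thesis by (simp add: exp_minus inverse_eq_divide)
qed

context tset begin

lemma FF_mono: "x \<le> y \<Longrightarrow> FF x \<le> FF y"
  using G_anti[of x y] by (simp add: FG)

lemma prob_B_lower:
  assumes a: "an n > 0" and p: "p \<ge> 1" and t: "1 \<le> t0" "t0 < t1"
    and A'[measurable]: "A' \<in> sets borel" "A' \<subseteq> {t0<..t1}"
    and x1: "an n * t0 powr p \<ge> x1"
  shows "prob {\<omega> \<in> space M. X 0 \<omega> \<in> {y. y > 0 \<and> (y / an n) powr (1 / p) \<in> A'}}
         \<ge> f (an n * t1 powr p) * (an n * t0 powr p / t1) * measure lborel A'"
proof -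
  define B where "B = {y. y > 0 \<and> (y / an n) powr (1 / p) \<in> A'}"
  have Bm[measurable]: "B \<in> sets borel" unfolding B_def by measurable
  define \<phi> where "\<phi> t = an n * t powr p" for t
  define \<phi>' where "\<phi>' t = an n * (p * t powr (p - 1))" for t
  define b0 where "b0 = \<phi> t0"
  define b1 where "b1 = \<phi> t1"
  define K where "K = f b1 * (b0 / t1)"
  have K0: "K \<ge> 0" using fnn a t by (simp add: K_def b0_def \<phi>_def)
  have deriv: "(\<phi> has_real_derivative \<phi>' t) (at t)" if "t \<in> {t0..t1}" for t
  proof -
    have "t > 0" using that t by auto
    then show ?thesis unfolding \<phi>_def \<phi>'_def by (intro DERIV_cmult has_real_derivative_powr)
  qed
  have cont: "continuous_on {t0..t1} \<phi>'"
    unfolding \<phi>'_def using t by (intro continuous_intros) auto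
  have dnn: "\<phi>' t \<ge> 0" if "t \<in> {t0..t1}" for t using that a p t by (simp add: \<phi>'_def)
  have sub: "(\<integral>\<^sup>+y. (f y * indicator B y) * indicator {\<phi> t0..\<phi> t1} y \<partial>lborel) =
        (\<integral>\<^sup>+t. (f (\<phi> t) * indicator B (\<phi> t)) * \<phi>' t * indicator {t0..t1} t \<partial>lborel)"
    by (rule nn_integral_substitution[OF _ deriv cont dnn]) (use t in \<open>auto simp: set_borel_measurable_def\<close>)
  have "(\<integral>\<^sup>+t. ennreal K * indicator A' t \<partial>lborel) \<le>
        (\<integral>\<^sup>+t. (f (\<phi> t) * indicator B (\<phi> t)) * \<phi>' t * indicator {t0..t1} t \<partial>lborel)"
  proof (intro nn_integral_mono)
    fix t
    show "ennreal K * indicator A' t \<le> ennreal ((f (\<phi> t) * indicator B (\<phi> t)) * \<phi>' t * indicator {t0..t1} t)"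
    proof (cases "t \<in> A'")
      case False then show ?thesis by simp
    next
      case True
      then have tt: "t0 < t" "t \<le> t1" using A' by auto
      have tpos: "t > 0" using tt t by simp
      have "t0 powr p \<le> t powr p" by (rule powr_mono2) (use p t tt in auto)
      then have mono1: "\<phi> t0 \<le> \<phi> t" using a unfolding \<phi>_def by (intro mult_left_mono) auto
      have "t powr p \<le> t1 powr p" by (rule powr_mono2) (use p t tt in auto)
      then have mono2: "\<phi> t \<le> \<phi> t1" using a unfolding \<phi>_def by (intro mult_left_mono) auto
      have phipos: "\<phi> t > 0" using a tpos by (simp add: \<phi>_def)
      have "(\<phi> t / an n) powr (1 / p) = (t powr p) powr (1 / p)" using a by (simp add: \<phi>_def)
      also have "\<dots> = t powr (p * (1 / p))" by (rule powr_powr)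
      also have "\<dots> = t" using p tpos by simp
      finally have inB: "\<phi> t \<in> B" using phipos True by (simp add: B_def)
      have fge: "f b1 \<le> f (\<phi> t)" using fmono[of "\<phi> t" b1] mono1 mono2 x1
        by (simp add: b1_def \<phi>_def b0_def)
      have "t powr (p - 1) = t powr p / t powr 1" by (rule powr_diff)
      then have "t powr (p - 1) = t powr p / t" using tpos by simp
      then have "\<phi>' t = \<phi> t * p / t" by (simp add: \<phi>'_def \<phi>_def)
      moreover have "b0 / t1 \<le> \<phi> t * p / t"
      proof -
        have "b0 / t1 \<le> \<phi> t / t" using mono1 tt tpos phipos a
          by (simp add: b0_def frac_le)
        also have "\<dots> \<le> \<phi> t * p / t" using p phipos tpos by (simp add: divide_right_mono)
        finally show ?thesis .
      qed
      ultimately have dge: "b0 / t1 \<le> \<phi>' t" by simp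
      have b0pos: "b0 \<ge> 0" using a t by (simp add: b0_def \<phi>_def)
      have "K \<le> f (\<phi> t) * \<phi>' t" unfolding K_def
        using fge dge fnn[of b1] b0pos t by (intro mult_mono) auto
      then show ?thesis using True inB tt by (auto simp: indicator_def intro: ennreal_leI)
    qed
  qed
  also have "\<dots> = (\<integral>\<^sup>+y. (f y * indicator B y) * indicator {\<phi> t0..\<phi> t1} y \<partial>lborel)"
    using sub by simp
  also have "\<dots> \<le> (\<integral>\<^sup>+y. ennreal (f y) * indicator B y \<partial>lborel)"
    by (intro nn_integral_mono) (auto simp: indicator_def fnn)
  also have "\<dots> = emeasure M {\<omega> \<in> space M. X 0 \<omega> \<in> B}" by (rule prob_dens[OF Bm, symmetric])
  finally have ineq: "ennreal K * emeasure lborel A' \<le> emeasure M {\<omega> \<in> space M. X 0 \<omega> \<in> B}"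
    by (simp add: nn_integral_cmult_indicator)
  have fin: "emeasure lborel A' < top"
  proof -
    have "emeasure lborel A' \<le> emeasure lborel {t0..t1}" using A' by (intro emeasure_mono) auto
    moreover have "emeasure lborel {t0..t1} = ennreal (t1 - t0)" using t by simp
    ultimately have "emeasure lborel A' \<le> ennreal (t1 - t0)" by simp
    then show ?thesis using ennreal_less_top[of "t1 - t0"] by (rule le_less_trans)
  qed
  have e1: "emeasure lborel A' = ennreal (measure lborel A')"
    using fin by (intro emeasure_eq_ennreal_measure) simp
  have e2: "emeasure M {\<omega> \<in> space M. X 0 \<omega> \<in> B} = ennreal (prob {\<omega> \<in> space M. X 0 \<omega> \<in> B})"
    by (rule emeasure_eq_measure)
  have "ennreal (K * measure lborel A') = ennreal K * emeasure lborel A'"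
    using e1 K0 by (simp add: ennreal_mult)
  then have "ennreal (K * measure lborel A') \<le> ennreal (prob {\<omega> \<in> space M. X 0 \<omega> \<in> B})"
    using ineq e2 by simp
  then have "K * measure lborel A' \<le> prob {\<omega> \<in> space M. X 0 \<omega> \<in> B}"
    by (subst (asm) ennreal_le_iff) auto
  then show ?thesis by (simp add: K_def B_def b0_def b1_def \<phi>_def)
qed

lemma lower_prob:
  assumes n: "n \<ge> 2" and a: "an n > 0" and p: "ln (real n) / \<alpha> \<ge> 1" and t: "1 \<le> t0" "t0 < t1"
    and A'[measurable]: "A' \<in> sets borel" "A' \<subseteq> {t0<..t1}"
    and x1: "an n * t0 powr (ln (real n) / \<alpha>) \<ge> x1"
  shows "prob {\<omega> \<in> space M. Zn n \<omega> \<in> A'} \<ge> real n * exp (-1) *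
      (f (an n * t1 powr (ln (real n) / \<alpha>)) * (an n * t0 powr (ln (real n) / \<alpha>) / t1) * measure lborel A')"
proof -
  define p where "p = ln (real n) / \<alpha>"
  have p1: "p \<ge> 1" using p by (simp add: p_def)
  have rp: "\<alpha> / ln (real n) = 1 / p" by (simp add: p_def)
  define B where "B = {y. y > 0 \<and> (y / an n) powr (1 / p) \<in> A'}"
  have Bm[measurable]: "B \<in> sets borel" unfolding B_def by measurable
  define b0 where "b0 = an n * t0 powr p"
  have PB: "prob {\<omega> \<in> space M. X 0 \<omega> \<in> B} \<ge> f (an n * t1 powr p) * (b0 / t1) * measure lborel A'"
    unfolding B_def b0_def by (rule prob_B_lower[OF a p1 t A']) (use x1 in \<open>simp add: p_def\<close>)
  have Bb0: "y > b0" if "y \<in> B" for y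
  proof -
    define u where "u = (y / an n) powr (1 / p)"
    have y: "y > 0" "u \<in> A'" using that by (auto simp: B_def u_def)
    have u: "t0 < u" using y A' by auto
    have "u powr p = (y / an n) powr ((1 / p) * p)" by (simp add: u_def powr_powr)
    also have "\<dots> = y / an n" using p1 y a by simp
    finally have uy: "an n * u powr p = y" using a by simp
    have "t0 powr p < u powr p" by (rule powr_less_mono2) (use p1 t u in auto)
    then have "an n * t0 powr p < an n * u powr p" using a by simp
    then show ?thesis using uy by (simp add: b0_def)
  qed
  have b0a: "b0 \<ge> an n"
  proof -
    have "1 \<le> t0 powr p" using t p1 by (simp add: ge_one_powr_ge_zero)
    then show ?thesis using a by (simp add: b0_def)
  qed
  have Fb0: "FF b0 \<ge> 1 - 1 / real n" using an_props(1)[OF n] FF_mono[OF b0a] by simp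
  have Fb0': "FF b0 ^ (n - 1) \<ge> exp (-1)"
  proof -
    have "0 \<le> 1 - 1 / real n" using n by simp
    then have "(1 - 1 / real n) ^ (n - 1) \<le> FF b0 ^ (n - 1)" using Fb0 by (intro power_mono) auto
    then show ?thesis using pow_bound[OF n] by simp
  qed
  define E where "E i = {\<omega> \<in> space M. X i \<omega> \<in> B \<and> (\<forall>j<n. j \<noteq> i \<longrightarrow> X j \<omega> \<le> b0)}" for i
  define Aj where "Aj i j = (if j = i then B else {..b0})" for i j :: nat
  have Em: "E i \<in> sets M" for i unfolding E_def by measurable
  have probE: "prob (E i) \<ge> prob {\<omega> \<in> space M. X 0 \<omega> \<in> B} * exp (-1)" if i: "i < n" for i
  proof -
    have Eeq: "E i = (\<Inter>j\<in>{..<n}. X j -` Aj i j \<inter> space M)"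
      using i by (auto simp: E_def Aj_def)
    have "prob (E i) = (\<Prod>j\<in>{..<n}. prob (X j -` Aj i j \<inter> space M))"
      unfolding Eeq by (rule indep_varsD[OF ind]) (use i in \<open>auto simp: Aj_def\<close>)
    also have "\<dots> = (\<Prod>j\<in>{..<n}. prob {\<omega> \<in> space M. X 0 \<omega> \<in> Aj i j})"
    proof (rule prod.cong[OF refl])
      fix j
      have m: "Aj i j \<in> sets borel" by (simp add: Aj_def)
      have "X j -` Aj i j \<inter> space M = {\<omega> \<in> space M. X j \<omega> \<in> Aj i j}" by auto
      then show "prob (X j -` Aj i j \<inter> space M) = prob {\<omega> \<in> space M. X 0 \<omega> \<in> Aj i j}"
        using prob_same[OF m, of j] by simp
    qed
    also have "\<dots> = prob {\<omega> \<in> space M. X 0 \<omega> \<in> Aj i i} *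
        (\<Prod>j\<in>{..<n} - {i}. prob {\<omega> \<in> space M. X 0 \<omega> \<in> Aj i j})"
      using i by (intro prod.remove) auto
    also have "(\<Prod>j\<in>{..<n} - {i}. prob {\<omega> \<in> space M. X 0 \<omega> \<in> Aj i j}) = (\<Prod>j\<in>{..<n} - {i}. FF b0)"
      by (rule prod.cong[OF refl]) (auto simp: Aj_def FF_def)
    also have "\<dots> = FF b0 ^ (n - 1)" using i by (simp add: card_Diff_singleton)
    finally have "prob (E i) = prob {\<omega> \<in> space M. X 0 \<omega> \<in> B} * FF b0 ^ (n - 1)" by (simp add: Aj_def)
    then show ?thesis using Fb0' by (simp add: mult_left_mono)
  qed
  have Esub: "E i \<subseteq> {\<omega> \<in> space M. Zn n \<omega> \<in> A'}" if i: "i < n" for i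
  proof
    fix \<omega> assume "\<omega> \<in> E i"
    then have \<omega>: "\<omega> \<in> space M" "X i \<omega> \<in> B" "\<And>j. j < n \<Longrightarrow> j \<noteq> i \<Longrightarrow> X j \<omega> \<le> b0"
      by (auto simp: E_def)
    have xi: "X i \<omega> > b0" using Bb0 \<omega>(2) by simp
    obtain j where j: "j < n" "sample_max X n \<omega> = X j \<omega>" using smax_ex[of n \<omega>] n by auto
    have "X i \<omega> \<le> sample_max X n \<omega>" using smax_ge[OF i] .
    then have "j = i" using j \<omega>(3)[of j] xi by force
    then have sm: "sample_max X n \<omega> = X i \<omega>" using j by simp
    have "X i \<omega> > 0" using \<omega>(2) by (simp add: B_def)
    then show "\<omega> \<in> {\<omega> \<in> space M. Zn n \<omega> \<in> A'}"
      using \<omega>(1,2) sm by (simp add: Zn_def rp B_def)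
  qed
  have disj: "disjoint_family_on E {..<n}"
    unfolding disjoint_family_on_def
  proof (intro ballI impI)
    fix i k assume ik: "i \<in> {..<n}" "k \<in> {..<n}" "i \<noteq> k"
    show "E i \<inter> E k = {}"
    proof (rule ccontr)
      assume "E i \<inter> E k \<noteq> {}"
      then obtain \<omega> where "\<omega> \<in> E i" "\<omega> \<in> E k" by blast
      then have "X k \<omega> \<le> b0" "X k \<omega> \<in> B" using ik by (auto simp: E_def)
      then show False using Bb0 by force
    qed
  qed
  have "real n * (prob {\<omega> \<in> space M. X 0 \<omega> \<in> B} * exp (-1)) = (\<Sum>i\<in>{..<n}. prob {\<omega> \<in> space M. X 0 \<omega> \<in> B} * exp (-1))"
    by simp
  also have "\<dots> \<le> (\<Sum>i\<in>{..<n}. prob (E i))" by (intro sum_mono probE) simp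
  also have "\<dots> = prob (\<Union>i\<in>{..<n}. E i)"
    by (rule finite_measure_finite_Union[symmetric]) (use Em disj in auto)
  also have "\<dots> \<le> prob {\<omega> \<in> space M. Zn n \<omega> \<in> A'}"
    by (rule finite_measure_mono) (use Esub in auto)
  finally have main: "real n * (prob {\<omega> \<in> space M. X 0 \<omega> \<in> B} * exp (-1)) \<le> prob {\<omega> \<in> space M. Zn n \<omega> \<in> A'}" .
  have "real n * exp (-1) * (f (an n * t1 powr p) * (b0 / t1) * measure lborel A')
      \<le> real n * exp (-1) * prob {\<omega> \<in> space M. X 0 \<omega> \<in> B}"
    using PB by (intro mult_left_mono) auto
  also have "\<dots> = real n * (prob {\<omega> \<in> space M. X 0 \<omega> \<in> B} * exp (-1))" by simp
  finally show ?thesis using main by (simp add: p_def b0_def)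
qed

end



context tset begin

lemma an_pos_ev: "eventually (\<lambda>n. an n > 1) sequentially"
  using filterlim_at_top_dense[THEN iffD1, OF an_lim, rule_format, of 1] by simp

lemma bn_lim: assumes "c \<ge> 0"
  shows "filterlim (\<lambda>n. an n * real n powr c) at_top sequentially"
proof (rule filterlim_at_top_mono[OF an_lim])
  show "eventually (\<lambda>n. an n \<le> an n * real n powr c) sequentially"
    using an_pos_ev eventually_ge_at_top[of 1]
  proof eventually_elim
    case (elim n)
    have "1 \<le> real n powr c" using elim assms by (simp add: ge_one_powr_ge_zero)
    then show ?case using elim by simp
  qed
qed

lemma ln_bn_ratio: "((\<lambda>n. ln (an n * real n powr c) / ln (real n)) \<longlongrightarrow> 1 / \<alpha> + c) sequentially"
proof -
  have "((\<lambda>n. ln (an n) / ln (real n) + c) \<longlongrightarrow> 1 / \<alpha> + c) sequentially"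
    by (intro tendsto_intros an_ratio)
  moreover have "eventually (\<lambda>n. ln (an n) / ln (real n) + c = ln (an n * real n powr c) / ln (real n)) sequentially"
    using an_pos_ev eventually_ge_at_top[of 2]
  proof eventually_elim
    case (elim n)
    have "ln (an n * real n powr c) = ln (an n) + c * ln (real n)"
      using elim by (simp add: ln_mult ln_powr)
    moreover have "ln (real n) > 0" using elim by simp
    ultimately show ?case by (simp add: field_simps)
  qed
  ultimately show ?thesis by (rule Lim_transform_eventually)
qed

lemma upper_lim: assumes s: "s > 0"
  shows "((\<lambda>n. ln (real n * G (an n * real n powr (s / \<alpha>) / 2)) / ln (real n)) \<longlongrightarrow> -s) sequentially"
proof -
  define y where "y n = an n * real n powr (s / \<alpha>) / 2" for n
  have yl: "filterlim y at_top sequentially"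
  proof -
    have bl: "filterlim (\<lambda>n. an n * real n powr (s / \<alpha>)) at_top sequentially"
      using s alpha by (intro bn_lim) simp
    have "filterlim (\<lambda>n. (1/2) * (an n * real n powr (s / \<alpha>))) at_top sequentially"
      by (rule filterlim_tendsto_pos_mult_at_top[OF tendsto_const _ bl]) simp
    moreover have "y = (\<lambda>n. (1/2) * (an n * real n powr (s / \<alpha>)))" by (auto simp: y_def fun_eq_iff)
    ultimately show ?thesis by simp
  qed
  have g: "((\<lambda>n. ln (G (y n)) / ln (y n)) \<longlongrightarrow> -\<alpha>) sequentially"
    using filterlim_compose[OF G_lim yl] by (simp add: o_def)
  have r: "((\<lambda>n. ln (an n * real n powr (s / \<alpha>)) / ln (real n) - ln 2 / ln (real n)) \<longlongrightarrow> (1 / \<alpha> + s / \<alpha>) - 0) sequentially"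
  proof (intro tendsto_intros ln_bn_ratio)
    have "((\<lambda>x::real. ln 2 / ln x) \<longlongrightarrow> 0) at_top" by real_asymp
    from filterlim_compose[OF this filterlim_real_sequentially]
    show "((\<lambda>n. ln 2 / ln (real n)) \<longlongrightarrow> 0) sequentially" by (simp add: o_def)
  qed
  have tot: "((\<lambda>n. 1 + (ln (G (y n)) / ln (y n)) * (ln (an n * real n powr (s / \<alpha>)) / ln (real n) - ln 2 / ln (real n)))
      \<longlongrightarrow> 1 + (-\<alpha>) * ((1 / \<alpha> + s / \<alpha>) - 0)) sequentially"
    by (intro tendsto_intros g r)
  have val: "1 + (-\<alpha>) * ((1 / \<alpha> + s / \<alpha>) - 0) = -s" using alpha by (simp add: field_simps)
  have ev: "eventually (\<lambda>n. 1 + (ln (G (y n)) / ln (y n)) * (ln (an n * real n powr (s / \<alpha>)) / ln (real n) - ln 2 / ln (real n))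
      = ln (real n * G (an n * real n powr (s / \<alpha>) / 2)) / ln (real n)) sequentially"
    using eventually_ge_at_top[of 2] filterlim_at_top_dense[THEN iffD1, OF yl, rule_format, of 1] an_pos_ev
  proof eventually_elim
    case (elim n)
    have lnn: "ln (real n) > 0" using elim by simp
    have ly: "ln (y n) > 0" using elim by simp
    have bpos: "an n * real n powr (s / \<alpha>) > 0" using elim by simp
    have "ln (y n) = ln (an n * real n powr (s / \<alpha>)) - ln 2" using bpos elim by (simp add: y_def ln_div)
    then have e1: "ln (an n * real n powr (s / \<alpha>)) / ln (real n) - ln 2 / ln (real n) = ln (y n) / ln (real n)"
      by (simp add: diff_divide_distrib)
    have e2: "ln (real n * G (y n)) = ln (real n) + ln (G (y n))" using elim G_pos[of "y n"] by (simp add: ln_mult)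
    show ?case unfolding e1 using lnn ly e2 by (simp add: y_def field_simps)
  qed
  show ?thesis using Lim_transform_eventually[OF tot ev] val by simp
qed

lemma exp_powr_n: "real n > 0 \<Longrightarrow> exp l powr (ln (real n) / \<alpha>) = real n powr (l / \<alpha>)"
  by (simp add: powr_def)

lemma lnn_ev: "eventually (\<lambda>n. ln (real n) / \<alpha> \<ge> 1) sequentially"
proof -
  have "eventually (\<lambda>n. real n \<ge> exp \<alpha>) sequentially"
    using eventually_ge_at_top[of "nat \<lceil>exp \<alpha>\<rceil>"] by eventually_elim linarith
  then show ?thesis
  proof eventually_elim
    case (elim n)
    have n0: "real n > 0" using elim exp_gt_zero[of \<alpha>] by linarith
    have "ln (exp \<alpha>) \<le> ln (real n)" using elim n0 by (subst ln_le_cancel_iff) auto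
    then show ?case using alpha by simp
  qed
qed

lemma lower_asym:
  assumes l: "0 \<le> l0" "l0 < l1" and A'[measurable]: "A' \<in> sets borel" "A' \<subseteq> {exp l0<..exp l1}"
    and m: "measure lborel A' > 0" and eta: "\<eta> > 0"
  shows "eventually (\<lambda>n. prob {\<omega> \<in> space M. Zn n \<omega> \<in> A'} > 0 \<and>
      ln (prob {\<omega> \<in> space M. Zn n \<omega> \<in> A'}) / ln (real n) \<ge> -l1 - (l1 - l0) / \<alpha> - \<eta>) sequentially"
proof -
  define mm where "mm = measure lborel A'"
  define b0 where "b0 n = an n * real n powr (l0 / \<alpha>)" for n
  define b1 where "b1 n = an n * real n powr (l1 / \<alpha>)" for n
  define Q where "Q n = real n * exp (-1) * (h (b1 n) * (b0 n / exp l1) * mm)" for n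
  define P where "P n = prob {\<omega> \<in> space M. Zn n \<omega> \<in> A'}" for n
  have b0l: "filterlim b0 at_top sequentially" unfolding b0_def using l alpha by (intro bn_lim) simp
  have b1l: "filterlim b1 at_top sequentially" unfolding b1_def using l alpha by (intro bn_lim) simp
  have ev_x1: "eventually (\<lambda>n. b0 n \<ge> x1) sequentially"
    using filterlim_at_top[THEN iffD1, OF b0l] by simp
  have ev_h: "eventually (\<lambda>n. h (b1 n) \<le> f (b1 n)) sequentially"
    by (rule eventually_compose_filterlim[OF f_ge_h b1l])
  have PQ: "eventually (\<lambda>n. 0 < Q n \<and> Q n \<le> P n) sequentially"
    using eventually_ge_at_top[of 2] an_pos_ev lnn_ev ev_x1 ev_h
  proof eventually_elim
    case (elim n)
    have n0: "real n > 0" using elim by simp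
    have t0: "1 \<le> exp l0" "exp l0 < exp l1" using l by auto
    have e0: "exp l0 powr (ln (real n) / \<alpha>) = real n powr (l0 / \<alpha>)" by (rule exp_powr_n[OF n0])
    have e1: "exp l1 powr (ln (real n) / \<alpha>) = real n powr (l1 / \<alpha>)" by (rule exp_powr_n[OF n0])
    have lp: "prob {\<omega> \<in> space M. Zn n \<omega> \<in> A'} \<ge> real n * exp (-1) *
      (f (an n * exp l1 powr (ln (real n) / \<alpha>)) * (an n * exp l0 powr (ln (real n) / \<alpha>) / exp l1) * measure lborel A')"
      by (rule lower_prob) (use elim t0 A' e0 in \<open>auto simp: b0_def\<close>)
    have b0p: "b0 n > 0" "b1 n > 0" using elim by (auto simp: b0_def b1_def)
    have "Q n \<le> real n * exp (-1) * (f (b1 n) * (b0 n / exp l1) * mm)"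
      unfolding Q_def using elim b0p m by (intro mult_left_mono mult_right_mono) (auto simp: mm_def)
    also have "\<dots> \<le> P n" using lp by (simp add: P_def b0_def b1_def e0 e1 mm_def)
    finally have "Q n \<le> P n" .
    moreover have "Q n > 0" using b0p h_pos[of "b1 n"] m n0 by (simp add: Q_def mm_def)
    ultimately show ?case by simp
  qed
  define L0 where "L0 = 1 + 0 + (-\<alpha> - 1) * (1 / \<alpha> + l1 / \<alpha>) + (1 / \<alpha> + l0 / \<alpha>)"
  have L0: "L0 = -l1 - (l1 - l0) / \<alpha>" using alpha by (simp add: L0_def field_simps)
  have hl: "((\<lambda>n. ln (h (b1 n)) / ln (b1 n)) \<longlongrightarrow> -\<alpha> - 1) sequentially"
    using filterlim_compose[OF h_lim b1l] by (simp add: o_def)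
  have c0: "((\<lambda>n. (ln mm - 1 - l1) / ln (real n)) \<longlongrightarrow> 0) sequentially"
  proof -
    have "((\<lambda>x::real. (ln mm - 1 - l1) / ln x) \<longlongrightarrow> 0) at_top" by real_asymp
    from filterlim_compose[OF this filterlim_real_sequentially] show ?thesis by (simp add: o_def)
  qed
  have lim: "((\<lambda>n. 1 + (ln mm - 1 - l1) / ln (real n) + (ln (h (b1 n)) / ln (b1 n)) * (ln (b1 n) / ln (real n))
        + ln (b0 n) / ln (real n)) \<longlongrightarrow> L0) sequentially"
    unfolding L0_def b0_def b1_def using hl unfolding b1_def
    by (intro tendsto_intros c0 ln_bn_ratio) auto
  have ev_eq: "eventually (\<lambda>n. 1 + (ln mm - 1 - l1) / ln (real n) + (ln (h (b1 n)) / ln (b1 n)) * (ln (b1 n) / ln (real n))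
        + ln (b0 n) / ln (real n) = ln (Q n) / ln (real n)) sequentially"
    using eventually_ge_at_top[of 2] an_pos_ev filterlim_at_top_dense[THEN iffD1, OF b1l, rule_format, of 1]
  proof eventually_elim
    case (elim n)
    have lnn: "ln (real n) > 0" using elim by simp
    have lb1: "ln (b1 n) > 0" using elim by simp
    have b0p: "b0 n > 0" using elim by (simp add: b0_def)
    have hp: "h (b1 n) > 0" using elim h_pos by simp
    have "ln (Q n) = ln (real n) + (-1) + ln (h (b1 n)) + ln (b0 n) - l1 + ln mm"
      using elim b0p hp m by (simp add: Q_def ln_mult ln_div mm_def)
    then show ?case using lnn lb1 by (simp add: field_simps)
  qed
  have "((\<lambda>n. ln (Q n) / ln (real n)) \<longlongrightarrow> L0) sequentially"
    by (rule Lim_transform_eventually[OF lim ev_eq])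
  then have "eventually (\<lambda>n. ln (Q n) / ln (real n) > L0 - \<eta>) sequentially"
    by (rule order_tendstoD) (use eta in simp)
  then show ?thesis using PQ eventually_ge_at_top[of 2]
  proof eventually_elim
    case (elim n)
    have "ln (Q n) \<le> ln (P n)" using elim by (subst ln_le_cancel_iff) auto
    then have "ln (Q n) / ln (real n) \<le> ln (P n) / ln (real n)" using elim by (intro divide_right_mono) auto
    then show ?case using elim L0 by (auto simp: P_def)
  qed
qed

end



context tset begin

definition PP :: "real set \<Rightarrow> nat \<Rightarrow> real" where
  "PP A n = prob {\<omega> \<in> space M. Zn n \<omega> \<in> A}"

lemma null_case:
  assumes A: "A \<in> sets borel" "A \<subseteq> {1..}" "emeasure lborel A = 0"
  shows "((\<lambda>n. ereal (1 / ln (real n)) * ln_ext (PP A n)) \<longlongrightarrow> - essinf_lebesgue A (\<lambda>x. ereal (ln x))) sequentially"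
proof -
  have S: "{c. emeasure lborel {x \<in> A. ereal (ln x) < c} = 0} = UNIV"
  proof -
    have "emeasure lborel {x \<in> A. ereal (ln x) < c} = 0" for c
    proof -
      have "emeasure lborel {x \<in> A. ereal (ln x) < c} \<le> emeasure lborel A"
        using A by (intro emeasure_mono) auto
      then show ?thesis using A by simp
    qed
    then show ?thesis by auto
  qed
  have ess: "- essinf_lebesgue A (\<lambda>x. ereal (ln x)) = -\<infinity>"
    unfolding essinf_lebesgue_def S by (simp add: top_ereal_def)
  have "eventually (\<lambda>n. ereal (1 / ln (real n)) * ln_ext (PP A n) = -\<infinity>) sequentially"
    using eventually_ge_at_top[of 2] an_pos_ev
  proof eventually_elim
    case (elim n)
    have "PP A n = 0" unfolding PP_def using elim A by (intro null_part) auto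
    moreover have "1 / ln (real n) > 0" using elim by simp
    ultimately show ?case by (simp add: ln_ext_def)
  qed
  then show ?thesis unfolding ess by (rule tendsto_eventually)
qed

lemma set_ln_eq: "{x \<in> A. ereal (ln x) < ereal c} = A \<inter> {x. ln x < c}" by auto

lemma set_ln_meas: fixes A :: "real set" and c :: real
  assumes "A \<in> sets borel" shows "A \<inter> {x. ln x < c} \<in> sets borel"
proof -
  have lnm: "(\<lambda>x::real. ln x) \<in> borel_measurable borel" using borel_measurable_ln[of "\<lambda>x. x" borel] by simp
  have "{x::real. ln x < c} = (\<lambda>x. ln x) -` {..<c} \<inter> space borel" by auto
  also have "\<dots> \<in> sets borel" by (rule measurable_sets[OF lnm]) simp
  finally show ?thesis using assms by (intro sets.Int) auto
qed

lemma PP_mono: "A' \<subseteq> A \<Longrightarrow> A \<in> sets borel \<Longrightarrow> PP A' n \<le> PP A n"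
  unfolding PP_def by (intro finite_measure_mono) auto

lemma lower_part:
  assumes A[measurable]: "A \<in> sets borel" and A1: "A \<subseteq> {1..}" and s: "s \<ge> 0"
    and P1: "\<And>c. c < s \<Longrightarrow> emeasure lborel (A \<inter> {x. ln x < c}) = 0"
    and P2: "\<And>c. c > s \<Longrightarrow> emeasure lborel (A \<inter> {x. ln x < c}) \<noteq> 0"
    and eta: "\<eta> > 0"
  shows "eventually (\<lambda>n. PP A n > 0 \<and> ln (PP A n) / ln (real n) > -s - \<eta>) sequentially"
proof -
  define \<delta> where "\<delta> = \<eta> * \<alpha> / (4 * (\<alpha> + 2))"
  have d: "\<delta> > 0" using eta alpha by (simp add: \<delta>_def)
  have d2: "\<delta> + 2 * \<delta> / \<alpha> = \<eta> / 4"
  proof -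
    have "\<delta> + 2 * \<delta> / \<alpha> = \<delta> * (\<alpha> + 2) / \<alpha>" using alpha by (simp add: field_simps)
    also have "\<dots> = \<eta> / 4" using alpha by (simp add: \<delta>_def) (simp add: divide_eq_eq algebra_simps)
    finally show ?thesis .
  qed
  define l1 where "l1 = s + \<delta>"
  define l0 where "l0 = max 0 (s - \<delta>)"
  have l: "0 \<le> l0" "l0 < l1" using s d by (auto simp: l0_def l1_def)
  define A' where "A' = A \<inter> {exp l0<..exp l1}"
  have A'm[measurable]: "A' \<in> sets borel" by (simp add: A'_def)
  define N0 where "N0 = A \<inter> {x. ln x < s - \<delta> / 2}"
  have N0m: "N0 \<in> sets borel" unfolding N0_def by (rule set_ln_meas[OF A])
  have N0z: "emeasure lborel N0 = 0" unfolding N0_def using d by (intro P1) simp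
  have cov: "A \<inter> {x. ln x < l1} \<subseteq> ({1} \<union> N0) \<union> A'"
  proof
    fix x assume x: "x \<in> A \<inter> {x. ln x < l1}"
    then have x1: "x \<ge> 1" using A1 by auto
    show "x \<in> ({1} \<union> N0) \<union> A'"
    proof (cases "x \<le> exp l0")
      case True
      have "ln x \<le> ln (exp l0)" using x1 True by (subst ln_le_cancel_iff) auto
      then have "ln x \<le> l0" by simp
      show ?thesis
      proof (cases "s - \<delta> \<le> 0")
        case True
        then have "ln x \<le> 0" using \<open>ln x \<le> l0\<close> by (simp add: l0_def)
        moreover have "ln x \<ge> 0" using x1 by simp
        ultimately have "ln x = 0" by simp
        then have "x = 1" using x1 by simp
        then show ?thesis by simp
      next
        case False
        then have "ln x < s - \<delta> / 2" using \<open>ln x \<le> l0\<close> d by (simp add: l0_def)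
        then show ?thesis using x by (simp add: N0_def)
      qed
    next
      case False
      have "exp (ln x) < exp l1" using x by simp
      then have "x < exp l1" using x1 by simp
      then show ?thesis using x False by (simp add: A'_def)
    qed
  qed
  have "emeasure lborel (A \<inter> {x. ln x < l1}) \<le> emeasure lborel (({1} \<union> N0) \<union> A')"
    using N0m by (intro emeasure_mono[OF cov]) auto
  also have "\<dots> \<le> emeasure lborel ({1} \<union> N0) + emeasure lborel A'"
    using N0m by (intro emeasure_subadditive) auto
  also have "emeasure lborel ({1} \<union> N0) = 0"
  proof -
    have "{1} \<union> N0 \<in> null_sets lborel" using N0m N0z by (intro null_sets.Un) (auto simp: null_sets_def)
    then show ?thesis by auto
  qed
  finally have "emeasure lborel (A \<inter> {x. ln x < l1}) \<le> emeasure lborel A'" by simp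
  moreover have "emeasure lborel (A \<inter> {x. ln x < l1}) \<noteq> 0" using d by (intro P2) (simp add: l1_def)
  ultimately have A'nz: "emeasure lborel A' \<noteq> 0" by auto
  have A'fin: "emeasure lborel A' < top"
  proof -
    have "emeasure lborel A' \<le> emeasure lborel {exp l0..exp l1}" by (intro emeasure_mono) (auto simp: A'_def)
    also have "\<dots> = ennreal (exp l1 - exp l0)" using l by simp
    finally show ?thesis using ennreal_less_top[of "exp l1 - exp l0"] by (rule le_less_trans)
  qed
  have mA': "measure lborel A' > 0"
    using A'nz A'fin by (simp add: measure_def enn2real_positive_iff less_top[symmetric] zero_less_iff_neq_zero)
  have ev: "eventually (\<lambda>n. prob {\<omega> \<in> space M. Zn n \<omega> \<in> A'} > 0 \<and>
      ln (prob {\<omega> \<in> space M. Zn n \<omega> \<in> A'}) / ln (real n) \<ge> -l1 - (l1 - l0) / \<alpha> - \<eta> / 4) sequentially"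
    by (rule lower_asym[OF l A'm _ mA']) (use eta in \<open>auto simp: A'_def\<close>)
  have bnd: "-l1 - (l1 - l0) / \<alpha> \<ge> -s - \<eta> / 4"
  proof -
    have "l1 - l0 \<le> 2 * \<delta>" by (simp add: l0_def l1_def)
    then have "(l1 - l0) / \<alpha> \<le> 2 * \<delta> / \<alpha>" using alpha by (intro divide_right_mono) auto
    then show ?thesis using d2 by (simp add: l1_def)
  qed
  show ?thesis using ev eventually_ge_at_top[of 2]
  proof eventually_elim
    case (elim n)
    have le: "PP A' n \<le> PP A n" by (rule PP_mono) (auto simp: A'_def)
    have pos: "PP A' n > 0" using elim by (simp add: PP_def)
    have "ln (PP A' n) \<le> ln (PP A n)" using le pos by (subst ln_le_cancel_iff) auto
    then have "ln (PP A' n) / ln (real n) \<le> ln (PP A n) / ln (real n)"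
      using elim by (intro divide_right_mono) auto
    moreover have "ln (PP A' n) / ln (real n) \<ge> -s - \<eta> / 2" using elim bnd by (simp add: PP_def)
    ultimately show ?case using le pos eta by auto
  qed
qed

lemma upper_part:
  assumes A[measurable]: "A \<in> sets borel" and A1: "A \<subseteq> {1..}" and s: "s \<ge> 0"
    and P1: "\<And>c. c < s \<Longrightarrow> emeasure lborel (A \<inter> {x. ln x < c}) = 0"
    and eta: "\<eta> > 0" and pos: "eventually (\<lambda>n. PP A n > 0) sequentially"
  shows "eventually (\<lambda>n. ln (PP A n) / ln (real n) < -s + \<eta>) sequentially"
proof (cases "s - \<eta> / 2 \<le> 0")
  case True
  show ?thesis using pos eventually_ge_at_top[of 2]
  proof eventually_elim
    case (elim n)
    have "PP A n \<le> 1" by (simp add: PP_def)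
    then have "ln (PP A n) \<le> 0" using elim by simp
    then have "ln (PP A n) / ln (real n) \<le> 0" using elim by (simp add: divide_nonpos_pos)
    then show ?case using True eta by linarith
  qed
next
  case False
  define s' where "s' = s - \<eta> / 2"
  have s': "s' > 0" "s' < s" using False eta by (auto simp: s'_def)
  define N where "N = A \<inter> {x. ln x < s'}"
  have Nm[measurable]: "N \<in> sets borel" unfolding N_def by (rule set_ln_meas[OF A])
  have Nz: "emeasure lborel N = 0" unfolding N_def using s' by (intro P1) simp
  define U where "U n = real n * G (an n * real n powr (s' / \<alpha>) / 2)" for n
  have ul: "((\<lambda>n. ln (U n) / ln (real n)) \<longlongrightarrow> -s') sequentially"
    unfolding U_def by (rule upper_lim[OF s'(1)])
  have "eventually (\<lambda>n. ln (U n) / ln (real n) < -s + \<eta>) sequentially"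
    by (rule order_tendstoD(2)[OF ul]) (use eta in \<open>simp add: s'_def\<close>)
  then show ?thesis using pos eventually_ge_at_top[of 2] an_pos_ev
  proof eventually_elim
    case (elim n)
    have sub: "{\<omega> \<in> space M. Zn n \<omega> \<in> A} \<subseteq> {\<omega> \<in> space M. Zn n \<omega> \<in> N} \<union> {\<omega> \<in> space M. Zn n \<omega> \<ge> exp s'}"
    proof
      fix \<omega> assume "\<omega> \<in> {\<omega> \<in> space M. Zn n \<omega> \<in> A}"
      then have w: "\<omega> \<in> space M" "Zn n \<omega> \<in> A" by auto
      then have z1: "Zn n \<omega> \<ge> 1" using A1 by auto
      show "\<omega> \<in> {\<omega> \<in> space M. Zn n \<omega> \<in> N} \<union> {\<omega> \<in> space M. Zn n \<omega> \<ge> exp s'}"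
      proof (cases "ln (Zn n \<omega>) < s'")
        case True then show ?thesis using w by (simp add: N_def)
      next
        case False
        then have "exp s' \<le> exp (ln (Zn n \<omega>))" by simp
        then show ?thesis using w z1 by simp
      qed
    qed
    have "PP A n \<le> prob ({\<omega> \<in> space M. Zn n \<omega> \<in> N} \<union> {\<omega> \<in> space M. Zn n \<omega> \<ge> exp s'})"
      unfolding PP_def by (intro finite_measure_mono[OF sub]) measurable
    also have "\<dots> \<le> prob {\<omega> \<in> space M. Zn n \<omega> \<in> N} + prob {\<omega> \<in> space M. Zn n \<omega> \<ge> exp s'}"
      by (intro measure_Un_le) measurable
    also have "prob {\<omega> \<in> space M. Zn n \<omega> \<in> N} = 0"
      using elim Nz A1 by (intro null_part) (auto simp: N_def)
    also have "prob {\<omega> \<in> space M. Zn n \<omega> \<ge> exp s'} \<le> U n"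
      unfolding U_def using elim s' by (intro upper_tail) auto
    finally have le: "PP A n \<le> U n" by simp
    have "ln (PP A n) \<le> ln (U n)" using le elim by (subst ln_le_cancel_iff) auto
    then have "ln (PP A n) / ln (real n) \<le> ln (U n) / ln (real n)"
      using elim by (intro divide_right_mono) auto
    then show ?case using elim by linarith
  qed
qed

end



context tset begin

lemma set_ln_meas2: fixes A :: "real set" and d :: ereal
  assumes "A \<in> sets borel" shows "{x \<in> A. ereal (ln x) < d} \<in> sets borel"
proof -
  have lnm: "(\<lambda>x::real. ln x) \<in> borel_measurable borel" using borel_measurable_ln[of "\<lambda>x. x" borel] by simp
  have em: "(\<lambda>x::real. ereal (ln x)) \<in> borel_measurable borel" using lnm by measurable
  have "{x \<in> A. ereal (ln x) < d} = A \<inter> ((\<lambda>x. ereal (ln x)) -` {..<d} \<inter> space borel)" by auto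
  also have "\<dots> \<in> sets borel" using assms by (intro sets.Int measurable_sets[OF em]) auto
  finally show ?thesis .
qed

lemma main_locale:
  assumes A: "A \<in> sets borel" "A \<subseteq> {1..}"
  shows "((\<lambda>n. ereal (1 / ln (real n)) * ln_ext (PP A n)) \<longlongrightarrow> - essinf_lebesgue A (\<lambda>x. ereal (ln x))) sequentially"
proof (cases "emeasure lborel A = 0")
  case True
  then show ?thesis using null_case A by simp
next
  case False
  define S where "S = {c. emeasure lborel {x \<in> A. ereal (ln x) < c} = 0}"
  have ess: "essinf_lebesgue A (\<lambda>x. ereal (ln x)) = Sup S" by (simp add: essinf_lebesgue_def S_def)
  have Smono: "d \<in> S" if "c \<in> S" "d \<le> c" for c d
  proof -
    have "emeasure lborel {x \<in> A. ereal (ln x) < d} \<le> emeasure lborel {x \<in> A. ereal (ln x) < c}"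
      using that A by (intro emeasure_mono set_ln_meas2) auto
    then show ?thesis using that by (simp add: S_def)
  qed
  obtain k :: nat where k: "emeasure lborel (A \<inter> {x. ln x < real k}) \<noteq> 0"
  proof (rule ccontr)
    assume "\<not> thesis"
    then have z: "\<And>k::nat. emeasure lborel (A \<inter> {x. ln x < real k}) = 0" using that by blast
    have "(\<Union>k::nat. A \<inter> {x. ln x < real k}) \<in> null_sets lborel"
      using z set_ln_meas[OF A(1)] by (intro null_sets_UN) (auto simp: null_sets_def)
    moreover have "(\<Union>k::nat. A \<inter> {x. ln x < real k}) = A"
    proof
      show "A \<subseteq> (\<Union>k::nat. A \<inter> {x. ln x < real k})"
      proof
        fix x assume "x \<in> A"
        obtain m :: nat where "ln x < real m" using reals_Archimedean2 by blast
        then show "x \<in> (\<Union>k::nat. A \<inter> {x. ln x < real k})" using \<open>x \<in> A\<close> by auto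
      qed
    qed auto
    ultimately show False using False by (simp add: null_sets_def)
  qed
  have ub: "Sup S \<le> ereal (real k)"
  proof (rule Sup_least)
    fix c assume c: "c \<in> S"
    show "c \<le> ereal (real k)"
    proof (rule ccontr)
      assume "\<not> ?thesis"
      then have "ereal (real k) \<in> S" using Smono[OF c] by simp
      then show False using k set_ln_eq[of A "real k"] by (simp add: S_def)
    qed
  qed
  have "ereal 0 \<in> S"
  proof -
    have "{x \<in> A. ereal (ln x) < ereal 0} = {}" using A by auto
    then show ?thesis unfolding S_def by (simp only: mem_Collect_eq emeasure_empty)
  qed
  then have lb: "ereal 0 \<le> Sup S" by (rule Sup_upper)
  define s where "s = real_of_ereal (Sup S)"
  have sS: "Sup S = ereal s" using ub lb unfolding s_def by (cases "Sup S") auto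
  have s0: "s \<ge> 0" using lb sS by simp
  have P1: "emeasure lborel (A \<inter> {x. ln x < c}) = 0" if "c < s" for c
  proof -
    have "ereal c < Sup S" using that sS by simp
    then obtain d where d: "d \<in> S" "ereal c < d" by (auto simp: less_Sup_iff)
    then have "ereal c \<in> S" using Smono by (meson less_imp_le)
    then show ?thesis using set_ln_eq[of A c] by (simp add: S_def)
  qed
  have P2: "emeasure lborel (A \<inter> {x. ln x < c}) \<noteq> 0" if "c > s" for c
  proof
    assume "emeasure lborel (A \<inter> {x. ln x < c}) = 0"
    then have "ereal c \<in> S" using set_ln_eq[of A c] by (simp add: S_def)
    then have "ereal c \<le> Sup S" by (rule Sup_upper)
    then show False using that sS by simp
  qed
  have pos: "eventually (\<lambda>n. PP A n > 0) sequentially"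
    using lower_part[OF A s0 P1 P2, of 1] by (rule eventually_mono) auto
  have rl: "((\<lambda>n. ln (PP A n) / ln (real n)) \<longlongrightarrow> -s) sequentially"
  proof (rule order_tendstoI)
    fix a assume "a < -s"
    then show "eventually (\<lambda>n. a < ln (PP A n) / ln (real n)) sequentially"
      using lower_part[OF A s0 P1 P2, of "-s - a"] by (auto elim: eventually_mono)
  next
    fix a assume "a > -s"
    then show "eventually (\<lambda>n. ln (PP A n) / ln (real n) < a) sequentially"
      using upper_part[OF A s0 P1 _ pos, of "a + s"] by auto
  qed
  then have el: "((\<lambda>n. ereal (ln (PP A n) / ln (real n))) \<longlongrightarrow> ereal (-s)) sequentially"
    by (rule tendsto_ereal)
  have "eventually (\<lambda>n. ereal (ln (PP A n) / ln (real n)) = ereal (1 / ln (real n)) * ln_ext (PP A n)) sequentially"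
    using pos by eventually_elim (simp add: ln_ext_def)
  from Lim_transform_eventually[OF el this] show ?thesis using ess sS by simp
qed

end



theorem theorem1:
  fixes M :: "'a measure" and X :: "nat \<Rightarrow> 'a \<Rightarrow> real"
    and f L :: "real \<Rightarrow> real" and \<alpha> x0 x1 :: real and A :: "real set"
  assumes "prob_space M"
    and "\<And>i. X i \<in> borel_measurable M"
    and "prob_space.indep_vars M (\<lambda>_. borel) X UNIV"
    and "\<And>i. distr M borel (X i) = distr M borel (X 0)"
    and "x0 > 0" and "\<alpha> > 0" and "slowly_varying L"
    and "\<And>x. x > x0 \<Longrightarrow> measure M {\<omega> \<in> space M. X 0 \<omega> > x} = x powr (-\<alpha>) * L x"
    and "distributed M lborel (X 0) (\<lambda>x. ennreal (f x))"
    and "\<And>x. f x \<ge> 0"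
    and "\<And>x y. x1 \<le> x \<Longrightarrow> x \<le> y \<Longrightarrow> f y \<le> f x"
    and "A \<in> sets borel" and "A \<subseteq> {1..}"
  shows "let F = (\<lambda>x. measure M {\<omega> \<in> space M. X 0 \<omega> \<le> x});
             a = (\<lambda>n::nat. left_inverse F (1 - 1 / real n));
             Z = (\<lambda>n \<omega>. if sample_max X n \<omega> > 0
                         then (sample_max X n \<omega> / a n) powr (\<alpha> / ln (real n)) else 0)
         in ((\<lambda>n. ereal (1 / ln (real n)) * ln_ext (measure M {\<omega> \<in> space M. Z n \<omega> \<in> A}))
               \<longlongrightarrow> - essinf_lebesgue A (\<lambda>x. ereal (ln x))) sequentially"
  proof -
  interpret tset M X f L \<alpha> x0 x1
    by (intro tset.intro tset_axioms.intro) (use assms in auto)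
  show ?thesis
    using main_locale[OF assms(12,13)] unfolding PP_def Zn_def an_def FF_def Let_def .
qed

end
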